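(* Let $L:\mathbb{R}^d\to\mathbb{R}^{\mathcal{Y}}_+$ be any polyhedral loss, and let $\ell:\mathcal{R}\to\mathbb{R}^{\mathcal{Y}}_+$ be a discrete loss that $L$ embeds. Then there exists a link function $\psi:\mathbb{R}^d\to\mathcal{R}$ such that $(L,\psi)$ is calibrated with respect to $\ell$.
   Context: $\mathcal{Y}$ is a finite set of labels; $\mathbb{R}^{\mathcal{Y}}_+$ is the nonnegative orthant; $\Delta_{\mathcal{Y}}=\{p\in\mathbb{R}^{\mathcal{Y}}_+ : \sum_y p_y=1\}$. A loss is a map $L:\mathcal{R}\to\mathbb{R}^{\mathcal{Y}}_+$ from a report set $\mathcal{R}$; its expected loss under $p\in\Delta_{\mathcal{Y}}$ is $\langle p, L(r)\rangle$. A loss is discrete if $\mathcal{R}$ is finite. A loss $L:\mathbb{R}^d\to\mathbb{R}^{\mathcal{Y}}_+$ is polyhedral if for each $y$, $u\mapsto L(u)_y$ is a polyhedral convex function (a pointwise maximum of finitely many affine functions). $L$ is minimizable if $\inf_r\langle p,L(r)\rangle$ is attained for every $p\in\Delta_{\mathcal{Y}}$; then $\mathrm{prop}[L](p)=\arg\min_{r}\langle p,L(r)\rangle$ (a nonempty-set-valued map, the property elicited by $L$), with level sets $\mathrm{prop}[L]_r=\{p : r\in\mathrm{prop}[L](p)\}$. A set $\mathcal{S}\subseteq\mathcal{R}$ is representative for a minimizable $L$ if $\mathrm{prop}[L](p)\cap\mathcal{S}\neq\emptyset$ for all $p\in\Delta_{\mathcal{Y}}$. A minimizable $L:\mathbb{R}^d\to\mathbb{R}^{\mathcal{Y}}_+$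 embeds $\ell:\mathcal{R}\to\mathbb{R}^{\mathcal{Y}}_+$ if there exist a representative set $\mathcal{S}$ for $\ell$ and an injective $\varphi:\mathcal{S}\to\mathbb{R}^d$ such that (i) $L(\varphi(r))=\ell(r)$ for all $r\in\mathcal{S}$, and (ii) for all $p\in\Delta_{\mathcal{Y}}$ and $r\in\mathcal{S}$, $r\in\mathrm{prop}[\ell](p)\iff\varphi(r)\in\mathrm{prop}[L](p)$. (Polyhedral losses are minimizable.) Given discrete $\ell$, surrogate $L:\mathbb{R}^d\to\mathbb{R}^{\mathcal{Y}}_+$ and link $\psi:\mathbb{R}^d\to\mathcal{R}$, $(L,\psi)$ is calibrated with respect to $\ell$ if for all $p\in\Delta_{\mathcal{Y}}$, $\inf_{u:\psi(u)\notin\mathrm{prop}[\ell](p)}\langle p,L(u)\rangle>\inf_{u\in\mathbb{R}^d}\langle p,L(u)\rangle$ (an infimum over the empty set is $+\infty$). *)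

theory Defs
  imports "HOL-Analysis.Analysis"
begin

(* Labels: finite type 'y.  A loss on report set 'r is a map  L :: 'r \<Rightarrow> 'y \<Rightarrow> real,
   L r y = L(r)_y.  Nonnegativity (values in R^Y_+) is a separate predicate. *)

definition prob_simplex :: "('y::finite \<Rightarrow> real) set" where
  "prob_simplex = {p. (\<forall>y. 0 \<le> p y) \<and> (\<Sum>y\<in>UNIV. p y) = 1}"

definition nonneg_loss :: "('r \<Rightarrow> 'y \<Rightarrow> real) \<Rightarrow> bool" where
  "nonneg_loss L \<longleftrightarrow> (\<forall>r y. 0 \<le> L r y)"

definition exp_loss :: "('r \<Rightarrow> 'y::finite \<Rightarrow> real) \<Rightarrow> ('y \<Rightarrow> real) \<Rightarrow> 'r \<Rightarrow> real" where
  "exp_loss L p r = (\<Sum>y\<in>UNIV. p y * L r y)"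

definition polyhedral_fun :: "('a::euclidean_space \<Rightarrow> real) \<Rightarrow> bool" where
  "polyhedral_fun f \<longleftrightarrow>
     (\<exists>A :: ('a \<times> real) set. finite A \<and> A \<noteq> {} \<and>
        (\<forall>u. f u = Max ((\<lambda>(a, b). a \<bullet> u + b) ` A)))"

definition polyhedral_loss :: "('a::euclidean_space \<Rightarrow> 'y \<Rightarrow> real) \<Rightarrow> bool" where
  "polyhedral_loss L \<longleftrightarrow> (\<forall>y. polyhedral_fun (\<lambda>u. L u y))"

definition minimizable :: "('r \<Rightarrow> 'y::finite \<Rightarrow> real) \<Rightarrow> bool" where
  "minimizable L \<longleftrightarrow>
     (\<forall>p\<in>prob_simplex. \<exists>r. \<forall>r'. exp_loss L p r \<le> exp_loss L p r')"

definition prop_of :: "('r \<Rightarrow> 'y::finite \<Rightarrow> real) \<Rightarrow> ('y \<Rightarrow> real) \<Rightarrow> 'r set" where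
  "prop_of L p = {r. \<forall>r'. exp_loss L p r \<le> exp_loss L p r'}"

definition representative :: "('r \<Rightarrow> 'y::finite \<Rightarrow> real) \<Rightarrow> 'r set \<Rightarrow> bool" where
  "representative L S \<longleftrightarrow> (\<forall>p\<in>prob_simplex. prop_of L p \<inter> S \<noteq> {})"

definition embeds ::
  "('a \<Rightarrow> 'y::finite \<Rightarrow> real) \<Rightarrow> ('r \<Rightarrow> 'y \<Rightarrow> real) \<Rightarrow> bool" where
  "embeds L l \<longleftrightarrow>
     minimizable L \<and>
     (\<exists>S \<phi>. representative l S \<and> inj_on \<phi> S \<and>
        (\<forall>r\<in>S. L (\<phi> r) = l r) \<and>
        (\<forall>p\<in>prob_simplex. \<forall>r\<in>S. r \<in> prop_of l p \<longleftrightarrow> \<phi> r \<in> prop_of L p))"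

(* calibration; Inf over the empty set is +\<infinity> via ereal *)
definition calibrated ::
  "('a \<Rightarrow> 'y::finite \<Rightarrow> real) \<Rightarrow> ('a \<Rightarrow> 'r) \<Rightarrow> ('r \<Rightarrow> 'y \<Rightarrow> real) \<Rightarrow> bool" where
  "calibrated L \<psi> l \<longleftrightarrow>
     (\<forall>p\<in>prob_simplex.
        (INF u\<in>{u. \<psi> u \<notin> prop_of l p}. ereal (exp_loss L p u))
          > (INF u\<in>UNIV. ereal (exp_loss L p u)))"

end

theory Submission
  imports Defs
begin

definition mval :: "('r::finite \<Rightarrow> 'y::finite \<Rightarrow> real) \<Rightarrow> ('y \<Rightarrow> real) \<Rightarrow> real" where
  "mval l p = Min (range (\<lambda>r. exp_loss l p r))"

definition Dreg :: "('r::finite \<Rightarrow> 'y::finite \<Rightarrow> real) \<Rightarrow> 'r \<Rightarrow> ('y \<Rightarrow> real) set" where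
  "Dreg l r' = {p \<in> prob_simplex. \<forall>r''. exp_loss l p r' \<le> exp_loss l p r''}"

lemma mval_le: "mval l p \<le> exp_loss l p r"
  unfolding mval_def by (rule Min_le) auto

lemma mval_in: "\<exists>r. mval l p = exp_loss l p r"
proof -
  have "mval l p \<in> range (\<lambda>r. exp_loss l p r)" unfolding mval_def by (rule Min_in) auto
  then show ?thesis by auto
qed

lemma mval_eq: "p \<in> Dreg l r' \<Longrightarrow> mval l p = exp_loss l p r'"
  unfolding mval_def Dreg_def by (intro Min_eqI) auto

lemma Dreg_cover: "p \<in> prob_simplex \<Longrightarrow> \<exists>r'. p \<in> Dreg l r'"
proof -
  assume p: "p \<in> prob_simplex"
  obtain r where r: "mval l p = exp_loss l p r" using mval_in by blast
  have "p \<in> Dreg l r" unfolding Dreg_def using p mval_le[of l p] r by auto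
  then show ?thesis by blast
qed

lemma prop_iff: "r \<in> prop_of l p \<longleftrightarrow> exp_loss l p r \<le> mval l p"
proof
  assume "r \<in> prop_of l p"
  moreover obtain r' where "mval l p = exp_loss l p r'" using mval_in by blast
  ultimately show "exp_loss l p r \<le> mval l p" unfolding prop_of_def by auto
next
  assume "exp_loss l p r \<le> mval l p"
  then show "r \<in> prop_of l p" unfolding prop_of_def using mval_le[of l p] order_trans by blast
qed

lemma lin_comb:
  fixes V :: "('y::finite \<Rightarrow> real) set"
  shows "(\<Sum>y\<in>UNIV. (\<Sum>q\<in>V. \<alpha> q * q y) * w y) = (\<Sum>q\<in>V. \<alpha> q * (\<Sum>y\<in>UNIV. q y * w y))"
  by (simp add: sum_distrib_left sum_distrib_right mult.assoc sum.swap[of _ UNIV V])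

lemma i1: "(\<chi> i. if i = y then -1 else 0) \<bullet> (x::real^'y) = - (x$y)"
  by (simp add: inner_vec_def if_distrib[of "\<lambda>a. a * _"] cong: if_cong)
lemma i2: "(\<chi> i. 1) \<bullet> (x::real^'y) = (\<Sum>i\<in>UNIV. x$i)"
  by (simp add: inner_vec_def)
lemma i3: "(\<chi> i. a i - b i) \<bullet> (x::real^'y) = (\<Sum>i\<in>UNIV. x$i * a i) - (\<Sum>i\<in>UNIV. x$i * b i)"
  by (simp add: inner_vec_def sum_subtractf algebra_simps)

lemma region_vertices:
  fixes l :: "'r::finite \<Rightarrow> 'y::finite \<Rightarrow> real"
  shows "\<exists>V. finite V \<and> V \<subseteq> Dreg l r' \<and>
     (\<forall>p\<in>Dreg l r'. \<exists>\<alpha>. (\<forall>q\<in>V. 0 \<le> \<alpha> q) \<and> p = (\<lambda>y. \<Sum>q\<in>V. \<alpha> q * q y))"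
proof -
  define D :: "(real^'y) set" where "D = {x. (\<forall>y. 0 \<le> x$y) \<and> (\<Sum>y\<in>UNIV. x$y) = 1 \<and>
      (\<forall>r''. (\<Sum>y\<in>UNIV. x$y * l r' y) \<le> (\<Sum>y\<in>UNIV. x$y * l r'' y))}"
  have DD: "x \<in> D \<longleftrightarrow> vec_nth x \<in> Dreg l r'" for x
    unfolding D_def Dreg_def prob_simplex_def exp_loss_def by auto
  have eq: "D = (\<Inter>y. {x. (\<chi> i. if i = y then -1 else 0) \<bullet> x \<le> (0::real)})
      \<inter> {x. (\<chi> i. 1) \<bullet> x \<le> (1::real)} \<inter> {x. (\<chi> i. 1) \<bullet> x \<ge> (1::real)}
      \<inter> (\<Inter>r''. {x. (\<chi> i. l r' i - l r'' i) \<bullet> x \<le> (0::real)})"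
    unfolding D_def i1 i2 i3 by auto
  have "polyhedron D"
    unfolding eq
    by (intro polyhedron_Int polyhedron_Inter polyhedron_halfspace_le polyhedron_halfspace_ge)
       (auto simp: polyhedron_halfspace_le)
  moreover have "bounded D"
  proof -
    have "D \<subseteq> cball 0 1"
    proof
      fix x assume "x \<in> D"
      then have "norm x \<le> (\<Sum>y\<in>UNIV. \<bar>x$y\<bar>)" "(\<Sum>y\<in>UNIV. \<bar>x$y\<bar>) = 1"
        using norm_le_l1_cart[of x] unfolding D_def by auto
      then show "x \<in> cball 0 1" by simp
    qed
    then show ?thesis using bounded_cball bounded_subset by blast
  qed
  ultimately have "polytope D" by (simp add: polytope_eq_bounded_polyhedron)
  then obtain W where W: "finite W" "D = convex hull W" unfolding polytope_def by blast
  have WD: "W \<subseteq> D" unfolding W(2) by (rule hull_subset)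
  have fin: "finite (vec_nth ` W)" using W(1) by simp
  have sub: "vec_nth ` W \<subseteq> Dreg l r'" using WD DD by auto
  have rep: "\<forall>p\<in>Dreg l r'. \<exists>\<alpha>. (\<forall>q\<in>vec_nth ` W. 0 \<le> \<alpha> q) \<and> p = (\<lambda>y. \<Sum>q\<in>vec_nth ` W. \<alpha> q * q y)"
  proof
    fix p assume p: "p \<in> Dreg l r'"
    have vl: "vec_nth (vec_lambda p) = p" by (rule ext) simp
    have "vec_lambda p \<in> D" using DD[of "vec_lambda p"] p vl by simp
    then obtain u where u: "\<forall>x\<in>W. 0 \<le> u x" "(\<Sum>x\<in>W. u x *\<^sub>R x) = vec_lambda p"
      using W convex_hull_finite[OF W(1)] by auto
    have inj: "inj_on vec_nth W" by (simp add: inj_on_def vec_nth_inject)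
    show "\<exists>\<alpha>. (\<forall>q\<in>vec_nth ` W. 0 \<le> \<alpha> q) \<and> p = (\<lambda>y. \<Sum>q\<in>vec_nth ` W. \<alpha> q * q y)"
    proof (intro exI conjI)
      show "\<forall>q\<in>vec_nth ` W. 0 \<le> (u \<circ> vec_lambda) q" using u(1) by auto
      show "p = (\<lambda>y. \<Sum>q\<in>vec_nth ` W. (u \<circ> vec_lambda) q * q y)"
      proof
        fix y
        have "p y = (vec_lambda p) $ y" by simp
        also have "\<dots> = (\<Sum>x\<in>W. u x * x $ y)" by (simp add: u(2)[symmetric])
        also have "\<dots> = (\<Sum>q\<in>vec_nth ` W. (u \<circ> vec_lambda) q * q y)"
          by (simp add: sum.reindex[OF inj])
        finally show "p y = (\<Sum>q\<in>vec_nth ` W. (u \<circ> vec_lambda) q * q y)" .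
      qed
    qed
  qed
  show ?thesis using fin sub rep by blast
qed

lemma common_opt:
  fixes L :: "'a \<Rightarrow> 'y::finite \<Rightarrow> real" and l :: "'r::finite \<Rightarrow> 'y \<Rightarrow> real"
  assumes E1: "\<And>p. p \<in> prob_simplex \<Longrightarrow> \<exists>r\<in>S. \<phi> r \<in> prop_of L p"
    and E2: "\<And>p r. p \<in> prob_simplex \<Longrightarrow> r \<in> S \<Longrightarrow> r \<in> prop_of l p \<longleftrightarrow> \<phi> r \<in> prop_of L p"
    and hm: "\<And>p u. p \<in> prob_simplex \<Longrightarrow> mval l p \<le> exp_loss L p u"
    and Z: "finite Z" "Z \<noteq> {}" "Z \<subseteq> prob_simplex"
    and small: "\<And>e. e > 0 \<Longrightarrow> \<exists>u. \<forall>q\<in>Z. exp_loss L q u - mval l q < e"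
  shows "\<exists>r. \<forall>q\<in>Z. r \<in> prop_of l q"
proof -
  define c where "c = real (card Z)"
  have c: "c > 0" using Z unfolding c_def by (simp add: card_gt_0_iff)
  define pb where "pb = (\<lambda>y. \<Sum>q\<in>Z. (1/c) * q y)"
  have pb_in: "pb \<in> prob_simplex"
  proof -
    have nn: "\<forall>y. 0 \<le> pb y" using Z(3) c unfolding pb_def prob_simplex_def
      by (auto intro!: sum_nonneg)
    have "(\<Sum>y\<in>UNIV. pb y) = (\<Sum>q\<in>Z. (1/c) * (\<Sum>y\<in>UNIV. q y * 1))"
      using lin_comb[of "\<lambda>_. 1/c" Z "\<lambda>_. 1"] unfolding pb_def by simp
    also have "\<dots> = (\<Sum>q\<in>Z. 1/c)"
      using Z(3) unfolding prob_simplex_def by (intro sum.cong) auto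
    also have "\<dots> = 1" using c unfolding c_def by simp
    finally show ?thesis using nn unfolding prob_simplex_def by simp
  qed
  have pbl: "exp_loss L pb u = (1/c) * (\<Sum>q\<in>Z. exp_loss L q u)" for u
    unfolding exp_loss_def pb_def lin_comb by (simp add: sum_distrib_left)
  obtain r0 where r0: "r0 \<in> S" "\<phi> r0 \<in> prop_of L pb" using E1[OF pb_in] by blast
  define s where "s u = (\<Sum>q\<in>Z. exp_loss L q u - mval l q)" for u
  have s_eq: "s u = c * exp_loss L pb u - (\<Sum>q\<in>Z. mval l q)" for u
    unfolding s_def pbl using c by (simp add: sum_subtractf)
  have "s (\<phi> r0) \<le> s u" for u
    using r0(2) c unfolding s_eq prop_of_def by auto
  have s0: "s (\<phi> r0) \<le> 0"
  proof (rule ccontr)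
    assume "\<not> s (\<phi> r0) \<le> 0"
    then have pos: "s (\<phi> r0) / c > 0" using c by simp
    obtain u where u: "\<forall>q\<in>Z. exp_loss L q u - mval l q < s (\<phi> r0) / c"
      using small[OF pos] by blast
    have "s u < (\<Sum>q\<in>Z. s (\<phi> r0) / c)" unfolding s_def[of u]
      using Z u by (intro sum_strict_mono) auto
    also have "\<dots> = s (\<phi> r0)" using c unfolding c_def by simp
    finally show False using \<open>s (\<phi> r0) \<le> s u\<close> by simp
  qed
  have nn: "\<forall>q\<in>Z. 0 \<le> exp_loss L q (\<phi> r0) - mval l q" using hm Z(3) by auto
  have "\<forall>q\<in>Z. exp_loss L q (\<phi> r0) - mval l q = 0"
    using s0 nn sum_nonneg_eq_0_iff[OF Z(1), of "\<lambda>q. exp_loss L q (\<phi> r0) - mval l q"]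
      sum_nonneg[of Z "\<lambda>q. exp_loss L q (\<phi> r0) - mval l q"] unfolding s_def by auto
  then have "\<forall>q\<in>Z. \<phi> r0 \<in> prop_of L q"
    using hm Z(3) unfolding prop_of_def by fastforce
  then show ?thesis using E2 r0(1) Z(3) by blast
qed

lemma exp_w:
  fixes p :: "'y::finite \<Rightarrow> real"
  shows "(\<Sum>y\<in>UNIV. p y * (a y - b y - C * (c y - b y))) =
    (\<Sum>y\<in>UNIV. p y * a y) - (\<Sum>y\<in>UNIV. p y * b y) - C * ((\<Sum>y\<in>UNIV. p y * c y) - (\<Sum>y\<in>UNIV. p y * b y))"
  by (simp add: right_diff_distrib sum_subtractf sum_distrib_left mult.left_commute)

theorem theorem2:
  fixes L :: "real ^ 'd \<Rightarrow> 'y::finite \<Rightarrow> real"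
    and l :: "'r::finite \<Rightarrow> 'y \<Rightarrow> real"
  assumes "nonneg_loss L" and "polyhedral_loss L"
    and "nonneg_loss l"
    and "embeds L l"
  shows "\<exists>\<psi> :: real ^ 'd \<Rightarrow> 'r. calibrated L \<psi> l"
proof -
  obtain S \<phi> where rep: "representative l S" and eqL: "\<forall>r\<in>S. L (\<phi> r) = l r"
    and iff: "\<forall>p\<in>prob_simplex. \<forall>r\<in>S. r \<in> prop_of l p \<longleftrightarrow> \<phi> r \<in> prop_of L p"
    using assms(4) unfolding embeds_def by blast
  have E1': "\<exists>r\<in>S. \<phi> r \<in> prop_of L p \<and> exp_loss L p (\<phi> r) = mval l p" if p: "p \<in> prob_simplex" for p
  proof -
    obtain r where r: "r \<in> S" "r \<in> prop_of l p" using rep p unfolding representative_def by blast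
    have "exp_loss L p (\<phi> r) = exp_loss l p r" using eqL r(1) unfolding exp_loss_def by simp
    moreover have "exp_loss l p r = mval l p" using r(2) prop_iff mval_le by (metis order_antisym)
    ultimately show ?thesis using r iff p by auto
  qed
  have E1: "\<And>p. p \<in> prob_simplex \<Longrightarrow> \<exists>r\<in>S. \<phi> r \<in> prop_of L p" using E1' by blast
  have E2: "\<And>p r. p \<in> prob_simplex \<Longrightarrow> r \<in> S \<Longrightarrow> r \<in> prop_of l p \<longleftrightarrow> \<phi> r \<in> prop_of L p"
    using iff by blast
  have hm: "mval l p \<le> exp_loss L p u" if "p \<in> prob_simplex" for p u
    using E1'[OF that] unfolding prop_of_def by fastforce
  have "\<forall>r'. \<exists>V. finite V \<and> V \<subseteq> Dreg l r' \<and>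
     (\<forall>p\<in>Dreg l r'. \<exists>\<alpha>. (\<forall>q\<in>V. 0 \<le> \<alpha> q) \<and> p = (\<lambda>y. \<Sum>q\<in>V. \<alpha> q * q y))"
    using region_vertices by blast
  from choice[OF this] obtain Vf where Vf0: "\<forall>r'. finite (Vf r') \<and> Vf r' \<subseteq> Dreg l r' \<and>
     (\<forall>p\<in>Dreg l r'. \<exists>\<alpha>. (\<forall>q\<in>Vf r'. 0 \<le> \<alpha> q) \<and> p = (\<lambda>y. \<Sum>q\<in>Vf r'. \<alpha> q * q y))"
    by blast
  have Vf: "\<And>r'. finite (Vf r')" "\<And>r'. Vf r' \<subseteq> Dreg l r'"
    "\<And>r' p. p \<in> Dreg l r' \<Longrightarrow> \<exists>\<alpha>. (\<forall>q\<in>Vf r'. 0 \<le> \<alpha> q) \<and> p = (\<lambda>y. \<Sum>q\<in>Vf r'. \<alpha> q * q y)"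
    using Vf0 by blast+
  define Q where "Q = (\<Union>r'. Vf r')"
  have Qfin: "finite Q" unfolding Q_def using Vf(1) by simp
  have QD: "Q \<subseteq> prob_simplex" unfolding Q_def using Vf(2) unfolding Dreg_def by blast
  define h where "h q u = exp_loss L q u - mval l q" for q u
  define Rg where "Rg q r = exp_loss l q r - mval l q" for q r
  have h_nn: "0 \<le> h q u" if "q \<in> prob_simplex" for q u using hm[OF that] unfolding h_def by simp
  define Bad where "Bad = {Z. Z \<subseteq> Q \<and> \<not> (\<exists>r. \<forall>q\<in>Z. r \<in> prop_of l q)}"
  have Badfin: "finite Bad" unfolding Bad_def using Qfin by (rule rev_finite_subset[OF finite_Pow_iff[THEN iffD2]]) auto
  have "\<exists>e>0. \<forall>u. \<exists>q\<in>Z. e \<le> h q u" if Z: "Z \<in> Bad" for Z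
  proof (rule ccontr)
    assume n: "\<not> ?thesis"
    have Zs: "finite Z" "Z \<noteq> {}" "Z \<subseteq> prob_simplex" using Z Qfin QD unfolding Bad_def
      by (auto intro: finite_subset)
    have "\<exists>u. \<forall>q\<in>Z. exp_loss L q u - mval l q < e" if "e > 0" for e
      using n that unfolding h_def by (auto simp: not_le)
    then have "\<exists>r. \<forall>q\<in>Z. r \<in> prop_of l q"
      using common_opt[OF E1 E2 hm Zs] by blast
    then show False using Z unfolding Bad_def by blast
  qed
  then obtain eZ where eZ: "\<And>Z. Z \<in> Bad \<Longrightarrow> eZ Z > 0" "\<And>Z u. Z \<in> Bad \<Longrightarrow> \<exists>q\<in>Z. eZ Z \<le> h q u"
    by metis
  define \<epsilon> where "\<epsilon> = Min (insert 1 (eZ ` Bad))"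
  have eps_pos: "\<epsilon> > 0" unfolding \<epsilon>_def using Badfin eZ(1) by (simp add: Min_gr_iff)
  have eps_le: "\<epsilon> \<le> eZ Z" if "Z \<in> Bad" for Z unfolding \<epsilon>_def using Badfin that by (intro Min_le) auto
  have good: "\<exists>r. \<forall>q\<in>{q\<in>Q. h q u < \<epsilon>}. r \<in> prop_of l q" for u
  proof (rule ccontr)
    assume "\<not> ?thesis"
    then have Zb: "{q\<in>Q. h q u < \<epsilon>} \<in> Bad" unfolding Bad_def by auto
    then obtain q where "q \<in> {q\<in>Q. h q u < \<epsilon>}" "eZ {q\<in>Q. h q u < \<epsilon>} \<le> h q u" using eZ(2) by blast
    then show False using eps_le[OF Zb] by simp
  qed
  define \<psi> where "\<psi> u = (SOME r. \<forall>q\<in>{q\<in>Q. h q u < \<epsilon>}. r \<in> prop_of l q)" for u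
  have \<psi>: "\<forall>q\<in>{q\<in>Q. h q u < \<epsilon>}. \<psi> u \<in> prop_of l q" for u
    unfolding \<psi>_def using someI_ex[OF good[of u]] .
  define B where "B = Max (insert 0 ((\<lambda>(q, r). Rg q r) ` (Q \<times> UNIV)))"
  have B0: "0 \<le> B" unfolding B_def using Qfin by (intro Max_ge) auto
  have BR: "Rg q r \<le> B" if "q \<in> Q" for q r unfolding B_def using Qfin that by (intro Max_ge) auto
  define C where "C = B / \<epsilon>"
  have C0: "0 \<le> C" unfolding C_def using B0 eps_pos by simp
  have claimQ: "Rg q (\<psi> u) \<le> C * h q u" if q: "q \<in> Q" for q u
  proof (cases "h q u < \<epsilon>")
    case True
    then have "\<psi> u \<in> prop_of l q" using \<psi>[of u] q by auto
    then have "Rg q (\<psi> u) \<le> 0" unfolding Rg_def using prop_iff by auto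
    moreover have "0 \<le> C * h q u" using C0 h_nn q QD by auto
    ultimately show ?thesis by linarith
  next
    case False
    have "C * \<epsilon> = B" unfolding C_def using eps_pos by simp
    moreover have "C * \<epsilon> \<le> C * h q u" using False C0 by (intro mult_left_mono) auto
    ultimately show ?thesis using BR[OF q, of "\<psi> u"] by linarith
  qed
  have claimAll: "Rg p (\<psi> u) \<le> C * h p u" if p: "p \<in> prob_simplex" for p u
  proof -
    obtain r' where r': "p \<in> Dreg l r'" using Dreg_cover[OF p] by blast
    obtain \<alpha> where \<alpha>: "\<forall>q\<in>Vf r'. 0 \<le> \<alpha> q" "p = (\<lambda>y. \<Sum>q\<in>Vf r'. \<alpha> q * q y)"
      using Vf(3)[OF r'] by blast
    define w where "w y = l (\<psi> u) y - l r' y - C * (L u y - l r' y)" for y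
    have key: "(\<Sum>y\<in>UNIV. x y * w y) = Rg x (\<psi> u) - C * h x u" if "x \<in> Dreg l r'" for x
      unfolding w_def exp_w Rg_def h_def mval_eq[OF that] exp_loss_def ..
    have "Rg p (\<psi> u) - C * h p u = (\<Sum>y\<in>UNIV. p y * w y)" using key[OF r'] by simp
    also have "\<dots> = (\<Sum>q\<in>Vf r'. \<alpha> q * (\<Sum>y\<in>UNIV. q y * w y))"
      by (subst \<alpha>(2)) (rule lin_comb)
    also have "\<dots> \<le> 0"
    proof (rule sum_nonpos)
      fix q assume q: "q \<in> Vf r'"
      have qD: "q \<in> Dreg l r'" using q Vf(2)[of r'] by blast
      have qQ: "q \<in> Q" unfolding Q_def using q by blast
      have "(\<Sum>y\<in>UNIV. q y * w y) \<le> 0" using key[OF qD] claimQ[OF qQ, of u] by linarith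
      then show "\<alpha> q * (\<Sum>y\<in>UNIV. q y * w y) \<le> 0" using \<alpha>(1) q by (simp add: mult_nonneg_nonpos)
    qed
    finally show ?thesis by simp
  qed
  have "calibrated L \<psi> l"
    unfolding calibrated_def
  proof
    fix p :: "'y \<Rightarrow> real" assume p: "p \<in> prob_simplex"
    define G where "G = {x. \<exists>r. x = Rg p r \<and> x > 0}"
    have Gfin: "finite G"
    proof -
      have "G \<subseteq> range (Rg p)" unfolding G_def by auto
      then show ?thesis by (rule finite_subset) auto
    qed
    define \<delta>0 where "\<delta>0 = Min (insert 1 G)"
    have d0: "\<delta>0 > 0" unfolding \<delta>0_def using Gfin by (simp add: Min_gr_iff G_def)
    have d0le: "\<delta>0 \<le> Rg p r" if "Rg p r > 0" for r
      unfolding \<delta>0_def using Gfin that by (intro Min_le) (auto simp: G_def)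
    define \<delta> where "\<delta> = \<delta>0 / (C + 1)"
    have dpos: "\<delta> > 0" unfolding \<delta>_def using d0 C0 by simp
    have bad: "mval l p + \<delta> \<le> exp_loss L p u" if u: "\<psi> u \<notin> prop_of l p" for u
    proof -
      have "Rg p (\<psi> u) > 0" using u prop_iff unfolding Rg_def by (metis diff_gt_0_iff_gt not_le)
      then have "\<delta>0 \<le> C * h p u" using d0le[of "\<psi> u"] claimAll[OF p, of u] by linarith
      also have "\<dots> \<le> (C + 1) * h p u" using h_nn[OF p] by (simp add: distrib_right)
      finally have "\<delta> \<le> h p u" unfolding \<delta>_def using C0 by (simp add: divide_le_eq mult.commute)
      then show ?thesis unfolding h_def by simp
    qed
    obtain r where r: "exp_loss L p (\<phi> r) = mval l p" using E1'[OF p] by blast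
    have "(INF u\<in>UNIV. ereal (exp_loss L p u)) \<le> ereal (mval l p)"
      unfolding r[symmetric] by (rule INF_lower) simp
    also have "\<dots> < ereal (mval l p + \<delta>)" using dpos by simp
    also have "\<dots> \<le> (INF u\<in>{u. \<psi> u \<notin> prop_of l p}. ereal (exp_loss L p u))"
    proof (rule INF_greatest)
      fix u assume "u \<in> {u. \<psi> u \<notin> prop_of l p}"
      then show "ereal (mval l p + \<delta>) \<le> ereal (exp_loss L p u)" using bad by simp
    qed
    finally show "(INF u\<in>{u. \<psi> u \<notin> prop_of l p}. ereal (exp_loss L p u)) > (INF u\<in>UNIV. ereal (exp_loss L p u))" .
  qed
  then show ?thesis by (rule exI[where x=\<psi>])
qed

end
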